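(* Let $\Omega=\{1,\dots,m\}^{\mathbb{N}}$, let $\mathcal{M}$ be the set of Borel probabilities on $\Omega$ with the Monge–Kantorovich metric $d_{MK}$, let $(\eta_j)_{j\in\mathbb{N}}$ be a sequence in $\mathcal{M}$, and let $R:\Omega\times\Omega\to\Omega$ be a continuous convolution kernel which is $s$-Lipschitz contractive in the second variable ($0\le s<1$ and $d_\Omega(R(x,y),R(x,y'))\le s\,d_\Omega(y,y')$ for all $x,y,y'$). Define $\phi_j:\mathcal{M}\to\mathcal{M}$ by $\phi_j(\mu)=\eta_j*\mu$, where $*$ is the convolution associated to $R$. Then the countable iterated function system $(\mathcal{M},\phi_j)_{j\in\mathbb{N}}$ is uniformly contractive with Lipschitz constant $s$, i.e. $d_{MK}(\phi_j(\mu),\phi_j(\mu'))\le s\,d_{MK}(\mu,\mu')$ for all $j$ and all $\mu,\mu'\in\mathcal{M}$.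
   Context: $d_\Omega(\alpha,\beta)=2^{-k}$ with $k=\min\{i:\alpha_i\neq\beta_i\}$ (and $0$ if $\alpha=\beta$); $d_{MK}(\mu,\nu)=\sup\{\int f\,d\mu-\int f\,d\nu : f \text{ 1-Lipschitz}\}$. The convolution associated to $R$ is $\int_\Omega f\,d(\nu*\mu)=\int\int f(R(x,y))\,d\nu(x)\,d\mu(y)$ for all continuous $f$. *)

theory Defs
  imports "HOL-Probability.Probability"
begin

text \<open>The symbol space Omega = {1,...,m}^N. Sequences are represented as functions
  nat => nat; position i of the function is the (i+1)-th symbol alpha_(i+1) of the paper.\<close>
definition OmegaSet :: "nat \<Rightarrow> (nat \<Rightarrow> nat) set" where
  "OmegaSet m = {\<alpha>. \<forall>i. \<alpha> i \<in> {1..m}}"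

text \<open>d_Omega(alpha,beta) = 2^(-k), k the (1-based) first index where they differ; 0 if equal.\<close>
definition dOmega :: "(nat \<Rightarrow> nat) \<Rightarrow> (nat \<Rightarrow> nat) \<Rightarrow> real" where
  "dOmega \<alpha> \<beta> = (if \<alpha> = \<beta> then 0 else (1/2) ^ (Suc (LEAST k. \<alpha> k \<noteq> \<beta> k)))"

definition Omega_open :: "nat \<Rightarrow> (nat \<Rightarrow> nat) set \<Rightarrow> bool" where
  "Omega_open m U \<longleftrightarrow> U \<subseteq> OmegaSet m \<and>
     (\<forall>x\<in>U. \<exists>e>0. \<forall>y\<in>OmegaSet m. dOmega x y < e \<longrightarrow> y \<in> U)"

definition OmegaBorel :: "nat \<Rightarrow> (nat \<Rightarrow> nat) measure" where
  "OmegaBorel m = sigma (OmegaSet m) {U. Omega_open m U}"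

definition ProbMeas :: "nat \<Rightarrow> (nat \<Rightarrow> nat) measure set" where
  "ProbMeas m = {\<mu>. sets \<mu> = sets (OmegaBorel m) \<and> prob_space \<mu>}"

definition Lip1 :: "nat \<Rightarrow> ((nat \<Rightarrow> nat) \<Rightarrow> real) \<Rightarrow> bool" where
  "Lip1 m f \<longleftrightarrow> (\<forall>x\<in>OmegaSet m. \<forall>y\<in>OmegaSet m. \<bar>f x - f y\<bar> \<le> dOmega x y)"

definition dMK :: "nat \<Rightarrow> (nat \<Rightarrow> nat) measure \<Rightarrow> (nat \<Rightarrow> nat) measure \<Rightarrow> real" where
  "dMK m \<mu> \<nu> = (SUP f\<in>{f. Lip1 m f}. (\<integral>x. f x \<partial>\<mu>) - (\<integral>x. f x \<partial>\<nu>))"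

definition kernel_continuous :: "nat \<Rightarrow> ((nat \<Rightarrow> nat) \<Rightarrow> (nat \<Rightarrow> nat) \<Rightarrow> (nat \<Rightarrow> nat)) \<Rightarrow> bool" where
  "kernel_continuous m R \<longleftrightarrow>
     (\<forall>x\<in>OmegaSet m. \<forall>y\<in>OmegaSet m. R x y \<in> OmegaSet m) \<and>
     (\<forall>x\<in>OmegaSet m. \<forall>y\<in>OmegaSet m. \<forall>e>0. \<exists>\<delta>>0. \<forall>x'\<in>OmegaSet m. \<forall>y'\<in>OmegaSet m.
        dOmega x x' < \<delta> \<and> dOmega y y' < \<delta> \<longrightarrow> dOmega (R x y) (R x' y') < e)"

definition conv :: "nat \<Rightarrow> ((nat \<Rightarrow> nat) \<Rightarrow> (nat \<Rightarrow> nat) \<Rightarrow> (nat \<Rightarrow> nat))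
     \<Rightarrow> (nat \<Rightarrow> nat) measure \<Rightarrow> (nat \<Rightarrow> nat) measure \<Rightarrow> (nat \<Rightarrow> nat) measure" where
  "conv m R \<nu> \<mu> = distr (\<nu> \<Otimes>\<^sub>M \<mu>) (OmegaBorel m) (\<lambda>(x, y). R x y)"

end

theory Submission
  imports Defs
begin

lemma dOmega_le_agree:
  assumes "\<forall>i<n. x i = y i"
  shows "dOmega x y \<le> (1/2) ^ (Suc n)"
proof (cases "x = y")
  case True then show ?thesis by (simp add: dOmega_def)
next
  case False
  then obtain k where k: "x k \<noteq> y k" by auto
  define l where "l = (LEAST k. x k \<noteq> y k)"
  have "x l \<noteq> y l" unfolding l_def using k by (rule LeastI)
  then have "n \<le> l" using assms by (meson not_le)
  then have "(1/2::real) ^ Suc l \<le> (1/2) ^ Suc n" by (intro power_decreasing) auto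
  then show ?thesis using False by (simp add: dOmega_def l_def)
qed

lemma dOmega_less_agree:
  assumes "dOmega x y < (1/2) ^ n" and "i < n"
  shows "x i = y i"
proof (rule ccontr)
  assume ne: "x i \<noteq> y i"
  then have xy: "x \<noteq> y" by auto
  define l where "l = (LEAST k. x k \<noteq> y k)"
  have "l \<le> i" unfolding l_def using ne by (rule Least_le)
  then have "(1/2::real) ^ n \<le> (1/2) ^ Suc l" using assms(2) by (intro power_decreasing) auto
  then show False using assms(1) xy by (simp add: dOmega_def l_def)
qed

lemma dOmega_nonneg: "dOmega x y \<ge> 0"
  by (simp add: dOmega_def)

lemma dOmega_le1: "dOmega x y \<le> 1"
proof -
  have "(1/2::real) ^ n \<le> 1" for n by (rule power_le_one) auto
  from this[of "Suc (LEAST k. x k \<noteq> y k)"] show ?thesis unfolding dOmega_def by (cases "x = y") auto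
qed

lemma dOmega_self: "dOmega x x = 0"
  by (simp add: dOmega_def)

lemma space_OmegaBorel: "space (OmegaBorel m) = OmegaSet m"
  unfolding OmegaBorel_def by (rule space_measure_of) (auto simp: Omega_open_def)

lemma sets_OmegaBorel: "sets (OmegaBorel m) = sigma_sets (OmegaSet m) {U. Omega_open m U}"
  unfolding OmegaBorel_def by (rule sets_measure_of) (auto simp: Omega_open_def)

lemma open_in_OmegaBorel: "Omega_open m U \<Longrightarrow> U \<in> sets (OmegaBorel m)"
  unfolding sets_OmegaBorel by auto

definition cyl :: "nat \<Rightarrow> nat list \<Rightarrow> (nat \<Rightarrow> nat) set" where
  "cyl m xs = {\<alpha>\<in>OmegaSet m. \<forall>i<length xs. \<alpha> i = xs ! i}"

lemma cyl_open: "Omega_open m (cyl m xs)"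
  unfolding Omega_open_def
proof (intro conjI ballI)
  show "cyl m xs \<subseteq> OmegaSet m" by (auto simp: cyl_def)
  fix x assume x: "x \<in> cyl m xs"
  show "\<exists>e>0. \<forall>y\<in>OmegaSet m. dOmega x y < e \<longrightarrow> y \<in> cyl m xs"
  proof (intro exI[of _ "(1/2) ^ length xs"] conjI ballI impI)
    fix y assume "y \<in> OmegaSet m" "dOmega x y < (1/2) ^ length xs"
    then show "y \<in> cyl m xs" using x dOmega_less_agree[of x y "length xs"]
      by (auto simp: cyl_def)
  qed simp
qed

lemma Lip1_measurable:
  assumes "Lip1 m f"
  shows "f \<in> borel_measurable (OmegaBorel m)"
proof (rule borel_measurableI)
  fix S :: "real set" assume S: "open S"
  have "Omega_open m (f -` S \<inter> OmegaSet m)"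
    unfolding Omega_open_def
  proof (intro conjI ballI)
    fix x assume x: "x \<in> f -` S \<inter> OmegaSet m"
    then obtain e where e: "e > 0" "\<forall>y. dist y (f x) < e \<longrightarrow> y \<in> S"
      using S open_dist by blast
    show "\<exists>e>0. \<forall>y\<in>OmegaSet m. dOmega x y < e \<longrightarrow> y \<in> f -` S \<inter> OmegaSet m"
    proof (intro exI[of _ e] conjI ballI impI)
      fix y assume y: "y \<in> OmegaSet m" "dOmega x y < e"
      have "\<bar>f x - f y\<bar> \<le> dOmega x y" using assms x y unfolding Lip1_def by auto
      then have "dist (f y) (f x) < e" using y by (simp add: dist_real_def abs_minus_commute)
      then show "y \<in> f -` S \<inter> OmegaSet m" using e y by auto
    qed (use e in auto)
  qed auto
  then show "f -` S \<inter> space (OmegaBorel m) \<in> sets (OmegaBorel m)"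
    by (simp add: space_OmegaBorel open_in_OmegaBorel)
qed

lemma in_cyl_prefix: "x \<in> OmegaSet m \<Longrightarrow> x \<in> cyl m (map x [0..<n])"
  by (auto simp: cyl_def)

lemma cyl_prefix_close:
  assumes "x' \<in> cyl m (map x [0..<n])"
  shows "dOmega x x' < (1/2) ^ n"
proof -
  have "\<forall>i<n. x i = x' i" using assms by (auto simp: cyl_def)
  then have "dOmega x x' \<le> (1/2) ^ Suc n" by (rule dOmega_le_agree)
  also have "\<dots> < (1/2) ^ n" by simp
  finally show ?thesis .
qed

lemma R_measurable_OB:
  assumes kc: "kernel_continuous m R"
  shows "(\<lambda>(x, y). R x y) \<in> measurable (OmegaBorel m \<Otimes>\<^sub>M OmegaBorel m) (OmegaBorel m)"
proof -
  let ?N = "OmegaBorel m \<Otimes>\<^sub>M OmegaBorel m"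
  have "(\<lambda>(x, y). R x y) \<in> measurable ?N (measure_of (OmegaSet m) {U. Omega_open m U} (\<lambda>_. 0))"
  proof (rule measurable_measure_of)
    show "{U. Omega_open m U} \<subseteq> Pow (OmegaSet m)" by (auto simp: Omega_open_def)
    show "(\<lambda>(x, y). R x y) \<in> space ?N \<rightarrow> OmegaSet m"
      using kc by (auto simp: space_pair_measure space_OmegaBorel kernel_continuous_def)
    fix U assume "U \<in> {U. Omega_open m U}"
    then have U: "Omega_open m U" by simp
    define V where "V = (\<lambda>(x, y). R x y) -` U \<inter> space ?N"
    have V: "V = {(x, y). x \<in> OmegaSet m \<and> y \<in> OmegaSet m \<and> R x y \<in> U}"
      by (auto simp: V_def space_pair_measure space_OmegaBorel)
    define I where "I = {(p, q). cyl m p \<times> cyl m q \<subseteq> V}"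
    have "V = (\<Union>pq\<in>I. cyl m (fst pq) \<times> cyl m (snd pq))"
    proof
      show "(\<Union>pq\<in>I. cyl m (fst pq) \<times> cyl m (snd pq)) \<subseteq> V" by (auto simp: I_def)
      show "V \<subseteq> (\<Union>pq\<in>I. cyl m (fst pq) \<times> cyl m (snd pq))"
      proof
        fix z assume "z \<in> V"
        then obtain x y where z: "z = (x, y)" and x: "x \<in> OmegaSet m" and y: "y \<in> OmegaSet m"
          and RU: "R x y \<in> U" by (auto simp: V)
        obtain e where e: "e > 0" "\<forall>w\<in>OmegaSet m. dOmega (R x y) w < e \<longrightarrow> w \<in> U"
          using U RU unfolding Omega_open_def by blast
        obtain d where d: "d > 0" "\<forall>x'\<in>OmegaSet m. \<forall>y'\<in>OmegaSet m.
            dOmega x x' < d \<and> dOmega y y' < d \<longrightarrow> dOmega (R x y) (R x' y') < e"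
          using kc x y e(1) unfolding kernel_continuous_def by blast
        obtain n where n: "(1/2::real) ^ n < d" using real_arch_pow_inv[OF d(1), of "1/2"] by auto
        let ?p = "map x [0..<n]" and ?q = "map y [0..<n]"
        have "cyl m ?p \<times> cyl m ?q \<subseteq> V"
        proof clarify
          fix x' y' assume x': "x' \<in> cyl m ?p" and y': "y' \<in> cyl m ?q"
          have x'O: "x' \<in> OmegaSet m" and y'O: "y' \<in> OmegaSet m" using x' y' by (auto simp: cyl_def)
          have "dOmega x x' < d" using cyl_prefix_close[OF x'] n by linarith
          moreover have "dOmega y y' < d" using cyl_prefix_close[OF y'] n by linarith
          ultimately have "dOmega (R x y) (R x' y') < e" using d(2) x'O y'O by blast
          moreover have "R x' y' \<in> OmegaSet m" using kc x'O y'O by (auto simp: kernel_continuous_def)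
          ultimately have "R x' y' \<in> U" using e(2) by blast
          then show "(x', y') \<in> V" using x'O y'O by (simp add: V)
        qed
        then have "(?p, ?q) \<in> I" by (simp add: I_def)
        moreover have "z \<in> cyl m ?p \<times> cyl m ?q" using z x y by (simp add: in_cyl_prefix)
        ultimately show "z \<in> (\<Union>pq\<in>I. cyl m (fst pq) \<times> cyl m (snd pq))" by force
      qed
    qed
    also have "\<dots> \<in> sets ?N"
    proof (rule sets.countable_UN')
      show "countable I" by (rule countable_subset[of _ UNIV]) auto
      show "(\<lambda>pq. cyl m (fst pq) \<times> cyl m (snd pq)) ` I \<subseteq> sets ?N"
        using open_in_OmegaBorel[OF cyl_open] by auto
    qed
    finally show "(\<lambda>(x, y). R x y) -` U \<inter> space ?N \<in> sets ?N" unfolding V_def .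
  qed
  then show ?thesis by (simp add: OmegaBorel_def)
qed

lemma R_measurable:
  assumes "kernel_continuous m R" "sets M1 = sets (OmegaBorel m)" "sets M2 = sets (OmegaBorel m)"
  shows "(\<lambda>(x, y). R x y) \<in> measurable (M1 \<Otimes>\<^sub>M M2) (OmegaBorel m)"
proof -
  have "sets (M1 \<Otimes>\<^sub>M M2) = sets (OmegaBorel m \<Otimes>\<^sub>M OmegaBorel m)"
    using assms(2,3) by (rule sets_pair_measure_cong)
  then show ?thesis using R_measurable_OB[OF assms(1)] measurable_cong_sets by blast
qed


lemma one_in_Omega: "m \<ge> 1 \<Longrightarrow> (\<lambda>_. 1) \<in> OmegaSet m"
  by (simp add: OmegaSet_def)

lemma PM_space: "\<mu> \<in> ProbMeas m \<Longrightarrow> space \<mu> = OmegaSet m"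
  unfolding ProbMeas_def using sets_eq_imp_space_eq[of \<mu> "OmegaBorel m"] space_OmegaBorel[of m] by auto

lemma PM_prob: "\<mu> \<in> ProbMeas m \<Longrightarrow> prob_space \<mu>"
  unfolding ProbMeas_def by auto

lemma PM_meas:
  assumes "\<mu> \<in> ProbMeas m" "Lip1 m f"
  shows "f \<in> borel_measurable \<mu>"
proof -
  have "sets \<mu> = sets (OmegaBorel m)" using assms(1) by (simp add: ProbMeas_def)
  then show ?thesis using Lip1_measurable[OF assms(2)] measurable_cong_sets by blast
qed

lemma Lip1_bound:
  assumes "Lip1 m f" "m \<ge> 1" "x \<in> OmegaSet m"
  shows "\<bar>f x\<bar> \<le> \<bar>f (\<lambda>_. 1)\<bar> + 1"
proof -
  have "\<bar>f x - f (\<lambda>_. 1)\<bar> \<le> dOmega x (\<lambda>_. 1)"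
    using assms one_in_Omega unfolding Lip1_def by blast
  also have "\<dots> \<le> 1" by (rule dOmega_le1)
  finally show ?thesis by linarith
qed

lemma PM_integrable:
  assumes "\<mu> \<in> ProbMeas m" "Lip1 m f" "m \<ge> 1"
  shows "integrable \<mu> f"
proof -
  interpret prob_space \<mu> using PM_prob[OF assms(1)] .
  show ?thesis
    by (rule integrable_const_bound[where B="\<bar>f (\<lambda>_. 1)\<bar> + 1"])
      (use PM_meas[OF assms(1,2)] Lip1_bound[OF assms(2,3)] PM_space[OF assms(1)] in auto)
qed

lemma PM_integral_bounds:
  assumes "\<mu> \<in> ProbMeas m" "Lip1 m f" "m \<ge> 1"
  shows "(\<integral>x. f x \<partial>\<mu>) \<le> f (\<lambda>_. 1) + 1" "(\<integral>x. f x \<partial>\<mu>) \<ge> f (\<lambda>_. 1) - 1"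
proof -
  interpret prob_space \<mu> using PM_prob[OF assms(1)] .
  have b: "f x \<le> f (\<lambda>_. 1) + 1 \<and> f (\<lambda>_. 1) - 1 \<le> f x" if "x \<in> space \<mu>" for x
  proof -
    have "\<bar>f x - f (\<lambda>_. 1)\<bar> \<le> dOmega x (\<lambda>_. 1)"
      using assms that one_in_Omega PM_space[OF assms(1)] unfolding Lip1_def by blast
    also have "\<dots> \<le> 1" by (rule dOmega_le1)
    finally show ?thesis by linarith
  qed
  have "(\<integral>x. f x \<partial>\<mu>) \<le> (\<integral>x. f (\<lambda>_. 1) + 1 \<partial>\<mu>)"
    by (rule integral_mono) (use PM_integrable[OF assms] b in auto)
  then show "(\<integral>x. f x \<partial>\<mu>) \<le> f (\<lambda>_. 1) + 1" by (simp add: prob_space)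
  have "(\<integral>x. f (\<lambda>_. 1) - 1 \<partial>\<mu>) \<le> (\<integral>x. f x \<partial>\<mu>)"
    by (rule integral_mono) (use PM_integrable[OF assms] b in auto)
  then show "(\<integral>x. f x \<partial>\<mu>) \<ge> f (\<lambda>_. 1) - 1" by (simp add: prob_space)
qed

lemma dMK_bdd:
  assumes "\<mu> \<in> ProbMeas m" "\<nu> \<in> ProbMeas m" "m \<ge> 1"
  shows "bdd_above ((\<lambda>f. (\<integral>x. f x \<partial>\<mu>) - (\<integral>x. f x \<partial>\<nu>)) ` {f. Lip1 m f})"
proof (rule bdd_aboveI[where M=2])
  fix t assume "t \<in> (\<lambda>f. (\<integral>x. f x \<partial>\<mu>) - (\<integral>x. f x \<partial>\<nu>)) ` {f. Lip1 m f}"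
  then obtain f where f: "Lip1 m f" "t = (\<integral>x. f x \<partial>\<mu>) - (\<integral>x. f x \<partial>\<nu>)" by auto
  show "t \<le> 2" using PM_integral_bounds[OF assms(1) f(1) assms(3)] PM_integral_bounds[OF assms(2) f(1) assms(3)] f(2)
    by linarith
qed

lemma dMK_upper:
  assumes "\<mu> \<in> ProbMeas m" "\<nu> \<in> ProbMeas m" "m \<ge> 1" "Lip1 m f"
  shows "(\<integral>x. f x \<partial>\<mu>) - (\<integral>x. f x \<partial>\<nu>) \<le> dMK m \<mu> \<nu>"
  unfolding dMK_def by (rule cSUP_upper) (use assms dMK_bdd in auto)

lemma conv_integral:
  assumes "\<eta> \<in> ProbMeas m" "\<mu> \<in> ProbMeas m" "m \<ge> 1" "Lip1 m f" "kernel_continuous m R"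
  shows "(\<integral>z. f z \<partial>conv m R \<eta> \<mu>) = (\<integral>x. (\<integral>y. f (R x y) \<partial>\<mu>) \<partial>\<eta>)"
    and "integrable \<eta> (\<lambda>x. \<integral>y. f (R x y) \<partial>\<mu>)"
proof -
  interpret P: pair_prob_space \<eta> \<mu>
    using PM_prob[OF assms(1)] PM_prob[OF assms(2)]
    by (simp add: pair_prob_space_def pair_sigma_finite_def prob_space_imp_sigma_finite)
  have T: "(\<lambda>(x, y). R x y) \<in> measurable (\<eta> \<Otimes>\<^sub>M \<mu>) (OmegaBorel m)"
    using R_measurable assms by (auto simp: ProbMeas_def)
  have fT: "(\<lambda>z. f (case z of (x, y) \<Rightarrow> R x y)) \<in> borel_measurable (\<eta> \<Otimes>\<^sub>M \<mu>)"
    using measurable_comp[OF T Lip1_measurable[OF assms(4)]] by (simp add: comp_def)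
  have int: "integrable (\<eta> \<Otimes>\<^sub>M \<mu>) (\<lambda>z. f (case z of (x, y) \<Rightarrow> R x y))"
  proof (rule P.integrable_const_bound[where B="\<bar>f (\<lambda>_. 1)\<bar> + 1"])
    show "AE z in \<eta> \<Otimes>\<^sub>M \<mu>. norm (f (case z of (x, y) \<Rightarrow> R x y)) \<le> \<bar>f (\<lambda>_. 1)\<bar> + 1"
    proof (rule AE_I2)
      fix z assume "z \<in> space (\<eta> \<Otimes>\<^sub>M \<mu>)"
      then obtain x y where "z = (x, y)" "x \<in> OmegaSet m" "y \<in> OmegaSet m"
        using PM_space[OF assms(1)] PM_space[OF assms(2)] by (auto simp: space_pair_measure)
      then show "norm (f (case z of (x, y) \<Rightarrow> R x y)) \<le> \<bar>f (\<lambda>_. 1)\<bar> + 1"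
        using Lip1_bound[OF assms(4,3)] assms(5) by (auto simp: kernel_continuous_def)
    qed
  qed (rule fT)
  have "(\<integral>z. f z \<partial>conv m R \<eta> \<mu>) = (\<integral>z. f (case z of (x, y) \<Rightarrow> R x y) \<partial>(\<eta> \<Otimes>\<^sub>M \<mu>))"
    unfolding conv_def by (rule integral_distr[OF T Lip1_measurable[OF assms(4)]])
  also have "\<dots> = (\<integral>x. (\<integral>y. f (R x y) \<partial>\<mu>) \<partial>\<eta>)"
    using P.integral_fst'[OF int] by simp
  finally show "(\<integral>z. f z \<partial>conv m R \<eta> \<mu>) = (\<integral>x. (\<integral>y. f (R x y) \<partial>\<mu>) \<partial>\<eta>)" .
  show "integrable \<eta> (\<lambda>x. \<integral>y. f (R x y) \<partial>\<mu>)"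
    using P.integrable_fst'[OF int] by simp
qed


lemma pointwise:
  assumes mu: "\<mu> \<in> ProbMeas m" and mu': "\<mu>' \<in> ProbMeas m" and m: "m \<ge> 1" and f: "Lip1 m f"
    and kc: "kernel_continuous m R" and s: "0 \<le> s" and x: "x \<in> OmegaSet m"
    and L: "\<And>x y y'. x \<in> OmegaSet m \<Longrightarrow> y \<in> OmegaSet m \<Longrightarrow> y' \<in> OmegaSet m \<Longrightarrow>
           dOmega (R x y) (R x y') \<le> s * dOmega y y'"
  shows "(\<integral>y. f (R x y) \<partial>\<mu>) - (\<integral>y. f (R x y) \<partial>\<mu>') \<le> s * dMK m \<mu> \<mu>'"
proof (cases "s = 0")
  case True
  have c: "f (R x y) = f (R x (\<lambda>_. 1))" if "y \<in> OmegaSet m" for y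
  proof -
    have "dOmega (R x y) (R x (\<lambda>_. 1)) \<le> 0" using L[OF x that one_in_Omega[OF m]] True by simp
    moreover have "\<bar>f (R x y) - f (R x (\<lambda>_. 1))\<bar> \<le> dOmega (R x y) (R x (\<lambda>_. 1))"
      using f kc x that one_in_Omega[OF m] unfolding Lip1_def kernel_continuous_def by blast
    ultimately show ?thesis by linarith
  qed
  have e: "(\<integral>y. f (R x y) \<partial>\<nu>) = f (R x (\<lambda>_. 1))" if "\<nu> \<in> ProbMeas m" for \<nu>
  proof -
    interpret prob_space \<nu> using PM_prob[OF that] .
    have "(\<integral>y. f (R x y) \<partial>\<nu>) = (\<integral>y. f (R x (\<lambda>_. 1)) \<partial>\<nu>)"
      by (rule Bochner_Integration.integral_cong) (use c PM_space[OF that] in auto)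
    then show ?thesis by (simp add: prob_space)
  qed
  show ?thesis using e[OF mu] e[OF mu'] True by simp
next
  case False
  then have sp: "s > 0" using s by simp
  define g where "g y = f (R x y) / s" for y
  have "Lip1 m g" unfolding Lip1_def
  proof (intro ballI)
    fix y y' assume y: "y \<in> OmegaSet m" and y': "y' \<in> OmegaSet m"
    have "\<bar>f (R x y) - f (R x y')\<bar> \<le> dOmega (R x y) (R x y')"
      using f kc x y y' unfolding Lip1_def kernel_continuous_def by blast
    also have "\<dots> \<le> s * dOmega y y'" by (rule L[OF x y y'])
    finally have "\<bar>f (R x y) - f (R x y')\<bar> / s \<le> dOmega y y'" using sp by (simp add: field_simps)
    moreover have "\<bar>g y - g y'\<bar> = \<bar>f (R x y) - f (R x y')\<bar> / s"
      using sp by (simp add: g_def diff_divide_distrib[symmetric])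
    ultimately show "\<bar>g y - g y'\<bar> \<le> dOmega y y'" by simp
  qed
  then have D: "(\<integral>y. g y \<partial>\<mu>) - (\<integral>y. g y \<partial>\<mu>') \<le> dMK m \<mu> \<mu>'"
    by (rule dMK_upper[OF mu mu' m])
  have fg: "(\<lambda>y. f (R x y)) = (\<lambda>y. s * g y)" using sp by (simp add: g_def)
  have "(\<integral>y. f (R x y) \<partial>\<mu>) - (\<integral>y. f (R x y) \<partial>\<mu>') = s * ((\<integral>y. g y \<partial>\<mu>) - (\<integral>y. g y \<partial>\<mu>'))"
    unfolding fg by (simp add: right_diff_distrib)
  also have "\<dots> \<le> s * dMK m \<mu> \<mu>'" using D s by (rule mult_left_mono)
  finally show ?thesis .
qed

theorem corollary3p2:
  fixes m :: nat and s :: real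
    and R :: "(nat \<Rightarrow> nat) \<Rightarrow> (nat \<Rightarrow> nat) \<Rightarrow> (nat \<Rightarrow> nat)"
    and \<eta> :: "nat \<Rightarrow> (nat \<Rightarrow> nat) measure"
  assumes "m \<ge> 1"
    and "\<And>j. \<eta> j \<in> ProbMeas m"
    and "kernel_continuous m R"
    and "0 \<le> s" and "s < 1"
    and "\<And>x y y'. x \<in> OmegaSet m \<Longrightarrow> y \<in> OmegaSet m \<Longrightarrow> y' \<in> OmegaSet m \<Longrightarrow>
           dOmega (R x y) (R x y') \<le> s * dOmega y y'"
  shows "\<forall>j. \<forall>\<mu>\<in>ProbMeas m. \<forall>\<mu>'\<in>ProbMeas m.
           conv m R (\<eta> j) \<mu> \<in> ProbMeas m \<and>
           dMK m (conv m R (\<eta> j) \<mu>) (conv m R (\<eta> j) \<mu>') \<le> s * dMK m \<mu> \<mu>'"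
proof (intro allI ballI conjI)
  fix j \<mu> \<mu>' assume mu: "\<mu> \<in> ProbMeas m" and mu': "\<mu>' \<in> ProbMeas m"
  have eta: "\<eta> j \<in> ProbMeas m" by (rule assms(2))
  have inPM: "conv m R (\<eta> j) \<nu> \<in> ProbMeas m" if nu: "\<nu> \<in> ProbMeas m" for \<nu>
  proof -
    have T: "(\<lambda>(x, y). R x y) \<in> measurable (\<eta> j \<Otimes>\<^sub>M \<nu>) (OmegaBorel m)"
      using R_measurable assms(3) eta nu by (auto simp: ProbMeas_def)
    have "prob_space (\<eta> j \<Otimes>\<^sub>M \<nu>)" by (rule prob_space_pair[OF PM_prob[OF eta] PM_prob[OF nu]])
    then have "prob_space (conv m R (\<eta> j) \<nu>)" unfolding conv_def by (rule prob_space.prob_space_distr[OF _ T])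
    then show ?thesis by (simp add: ProbMeas_def conv_def)
  qed
  show "conv m R (\<eta> j) \<mu> \<in> ProbMeas m" by (rule inPM[OF mu])
  show "dMK m (conv m R (\<eta> j) \<mu>) (conv m R (\<eta> j) \<mu>') \<le> s * dMK m \<mu> \<mu>'"
    unfolding dMK_def[of m "conv m R (\<eta> j) \<mu>"]
  proof (rule cSUP_least)
    show "{f. Lip1 m f} \<noteq> {}"
      using dOmega_nonneg by (auto simp: Lip1_def intro!: exI[of _ "\<lambda>_. 0"])
    fix f assume "f \<in> {f. Lip1 m f}"
    then have f: "Lip1 m f" by simp
    note c1 = conv_integral[OF eta mu assms(1) f assms(3)]
    note c2 = conv_integral[OF eta mu' assms(1) f assms(3)]
    interpret prob_space "\<eta> j" using PM_prob[OF eta] .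
    have "(\<integral>z. f z \<partial>conv m R (\<eta> j) \<mu>) - (\<integral>z. f z \<partial>conv m R (\<eta> j) \<mu>')
        = (\<integral>x. (\<integral>y. f (R x y) \<partial>\<mu>) - (\<integral>y. f (R x y) \<partial>\<mu>') \<partial>\<eta> j)"
      using c1 c2 by simp
    also have "\<dots> \<le> (\<integral>x. s * dMK m \<mu> \<mu>' \<partial>\<eta> j)"
      by (rule integral_mono) (use c1 c2 pointwise[OF mu mu' assms(1) f assms(3) assms(4) _ assms(6)] PM_space[OF eta] in auto)
    also have "\<dots> = s * dMK m \<mu> \<mu>'" by (simp add: prob_space)
    finally show "(\<integral>z. f z \<partial>conv m R (\<eta> j) \<mu>) - (\<integral>z. f z \<partial>conv m R (\<eta> j) \<mu>') \<le> s * dMK m \<mu> \<mu>'" .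
  qed
qed

end
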